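(* Let $f:\mathbb{R}\to\mathbb{R}$ be a Lipschitz continuous, 1-periodic function which is exactly 1-periodic, in the sense that $f(\cdot-\theta)\neq f(\cdot-\theta^* )$ on a set of positive Lebesgue measure whenever $\theta\neq\theta^* \bmod 1$. Let $Z_1,\dots,Z_n$ be iid with an even density $\phi$ and distribution function $\Phi$, fix $\theta^*\in\mathbb{R}$, and observe $Y_i=f(x_i-\theta^* )+Z_i$, $i=1,\dots,n$, with $x_i:=i/n$. Let $R_i$ denote the rank of $Y_i$ among $Y_1,\dots,Y_n$ (in increasing order) and set $$\widehat M_n(\theta):=\frac1n\sum_{i=1}^n \frac{R_i}{n}\, f(x_i-\theta).$$ Define $\Phi_2(t):=\int_{-\infty}^\infty \Phi(t+z)\phi(z)\,dz$ and $$M(\theta):=\int_0^1\!\!\int_0^1 \Phi_2\big(f(x_0)-f(x)\big)\, f(x_0+\theta^*-\theta)\,dx\,dx_0 .$$ Then $\sup_{\theta\in\mathbb{R}}|\widehat M_n(\theta)-M(\theta)|\to 0$ in probability as $n\to\infty$.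
   Context: Template matching model: $f$ is the known template, $\theta^*$ the unknown shift, $Z_i$ the noise. *)

theory Defs
  imports "HOL-Probability.Probability"
begin

definition rank :: "(nat \<Rightarrow> real) \<Rightarrow> nat \<Rightarrow> nat \<Rightarrow> nat" where
  "rank Y n i = card {j \<in> {1..n}. Y j \<le> Y i}"

definition Mhat :: "(real \<Rightarrow> real) \<Rightarrow> (nat \<Rightarrow> real) \<Rightarrow> nat \<Rightarrow> real \<Rightarrow> real" where
  "Mhat f Y n \<theta> = (1 / real n) * (\<Sum>i = 1..n. (real (rank Y n i) / real n) * f (real i / real n - \<theta>))"

definition Phi2 :: "(real \<Rightarrow> real) \<Rightarrow> (real \<Rightarrow> real) \<Rightarrow> real \<Rightarrow> real" where
  "Phi2 \<Phi> \<phi> t = (LINT z|lborel. \<Phi> (t + z) * \<phi> z)"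

definition Mpop :: "(real \<Rightarrow> real) \<Rightarrow> (real \<Rightarrow> real) \<Rightarrow> (real \<Rightarrow> real) \<Rightarrow> real \<Rightarrow> real \<Rightarrow> real" where
  "Mpop f \<Phi> \<phi> \<theta>s \<theta> =
     (LBINT x0=0..1. (LBINT x=0..1. Phi2 \<Phi> \<phi> (f x0 - f x) * f (x0 + \<theta>s - \<theta>)))"

end

theory Submission
  imports Defs
begin


lemma per_int:
  fixes F :: "real \<Rightarrow> 'b"
  assumes per: "\<And>x. F (x + 1) = F x"
  shows "F (x + real_of_int k) = F x"
proof (induction k rule: int_induct[where k=0])
  case base then show ?case by simp
next
  case (step1 i)
  have "F (x + real_of_int (i + 1)) = F ((x + real_of_int i) + 1)" by (simp add: algebra_simps)
  then show ?case using step1 per by simp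
next
  case (step2 i)
  have e: "x + (real_of_int i - 1) + 1 = x + real_of_int i" by simp
  have "F (x + (real_of_int i - 1) + 1) = F (x + (real_of_int i - 1))" by (rule per)
  then show ?case using step2 e by simp
qed

lemma per_frac:
  fixes F :: "real \<Rightarrow> 'b"
  assumes per: "\<And>x. F (x + 1) = F x"
  shows "F (x - real_of_int \<lfloor>x\<rfloor>) = F x"
  using per_int[where F=F, OF per, of "x - real_of_int \<lfloor>x\<rfloor>" "\<lfloor>x\<rfloor>"] by simp

lemma shift_integral:
  fixes F :: "real \<Rightarrow> real"
  assumes cont: "continuous_on UNIV F" and per: "\<And>x. F (x + 1) = F x"
  shows "integral {s..s+1} F = integral {0..1} F"
proof -
  define r where "r = s - real_of_int \<lfloor>s\<rfloor>"
  have r0: "0 \<le> r" and r1: "r < 1" unfolding r_def by linarith+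
  have c: "continuous_on A F" for A using cont continuous_on_subset by blast
  have "integral {r..r+1} (F \<circ> (\<lambda>x. x + real_of_int \<lfloor>s\<rfloor>)) = integral {s..s+1} F"
    using integral_shift[OF c, of r "r+1" "real_of_int \<lfloor>s\<rfloor>"] by (simp add: r_def)
  moreover have "(F \<circ> (\<lambda>x. x + real_of_int \<lfloor>s\<rfloor>)) = F"
    by (auto simp: per_int[where F=F, OF per])
  ultimately have e1: "integral {s..s+1} F = integral {r..r+1} F" by simp
  have e2: "integral {r..1} F + integral {1..r+1} F = integral {r..r+1} F"
    by (rule Henstock_Kurzweil_Integration.integral_combine) (use r0 r1 in \<open>auto intro!: integrable_continuous_real c\<close>)
  have "integral {0..r} (F \<circ> (\<lambda>x. x + 1)) = integral {1..r+1} F"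
    using integral_shift[OF c, of 0 r 1] by (simp add: add.commute)
  moreover have "(F \<circ> (\<lambda>x. x + 1)) = F" by (auto simp: per)
  ultimately have e3: "integral {1..r+1} F = integral {0..r} F" by simp
  have e4: "integral {0..r} F + integral {r..1} F = integral {0..1} F"
    by (rule Henstock_Kurzweil_Integration.integral_combine) (use r0 r1 in \<open>auto intro!: integrable_continuous_real c\<close>)
  show ?thesis using e1 e2 e3 e4 by linarith
qed

lemma integral_split_n:
  fixes F :: "real \<Rightarrow> real"
  assumes cont: "continuous_on UNIV F" and n: "n > 0"
  shows "k \<le> n \<Longrightarrow> integral {s..s + real k / real n} F =
     (\<Sum>i=1..k. integral {s + (real i - 1) / real n .. s + real i / real n} F)"
proof (induction k)
  case 0 then show ?case by simp
next
  case (Suc k)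
  have c: "continuous_on A F" for A using cont continuous_on_subset by blast
  have "integral {s..s + real k / real n} F + integral {s + real k / real n .. s + real (Suc k) / real n} F
        = integral {s..s + real (Suc k) / real n} F"
  proof (rule Henstock_Kurzweil_Integration.integral_combine)
    show "s \<le> s + real k / real n" using n by simp
    show "s + real k / real n \<le> s + real (Suc k) / real n" using n by (simp add: divide_right_mono)
  qed (auto intro!: integrable_continuous_real c)
  then show ?case using Suc by simp
qed

lemma riemann1:
  fixes F :: "real \<Rightarrow> real"
  assumes cont: "continuous_on UNIV F" and per: "\<And>x. F (x + 1) = F x"
    and n: "n > 0" and md: "\<And>x y. \<bar>x - y\<bar> \<le> 1 / real n \<Longrightarrow> \<bar>F x - F y\<bar> \<le> e"
  shows "\<bar>(\<Sum>i=1..n. F (real i / real n + s)) / real n - integral {0..1} F\<bar> \<le> e"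
proof -
  have c: "continuous_on A F" for A using cont continuous_on_subset by blast
  have I: "integral {0..1} F = (\<Sum>i=1..n. integral {s + (real i - 1) / real n .. s + real i / real n} F)"
    using integral_split_n[OF cont n, of n s] shift_integral[OF cont per, of s] n by simp
  have piece: "\<bar>F (real i / real n + s) / real n - integral {s + (real i - 1) / real n .. s + real i / real n} F\<bar> \<le> e / real n"
    for i
  proof -
    let ?a = "s + (real i - 1) / real n" and ?b = "s + real i / real n"
    have ab: "?a \<le> ?b" using n by (simp add: divide_right_mono)
    have len: "?b - ?a = 1 / real n" by (simp add: diff_divide_distrib)
    have "integral {?a..?b} (\<lambda>x. F (real i / real n + s)) = F (real i / real n + s) / real n"
      using ab len by simp
    then have "F (real i / real n + s) / real n - integral {?a..?b} F
        = integral {?a..?b} (\<lambda>x. F (real i / real n + s) - F x)"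
      by (subst integral_diff) (auto intro!: integrable_continuous_real c continuous_intros)
    also have "\<bar>\<dots>\<bar> \<le> e * (?b - ?a)"
    proof -
      have "norm (integral {?a..?b} (\<lambda>x. F (real i / real n + s) - F x)) \<le> e * (?b - ?a)"
      proof (rule integral_bound[OF ab])
        show "continuous_on {?a..?b} (\<lambda>x. F (real i / real n + s) - F x)"
          by (auto intro!: continuous_intros c)
        fix t assume t: "t \<in> {?a..?b}"
        have "\<bar>(real i / real n + s) - t\<bar> \<le> 1 / real n" using t len by auto
        then show "norm (F (real i / real n + s) - F t) \<le> e" using md by simp
      qed
      then show ?thesis by simp
    qed
    finally show ?thesis using len by simp
  qed
  have "\<bar>(\<Sum>i=1..n. F (real i / real n + s)) / real n - integral {0..1} F\<bar>
     = \<bar>\<Sum>i=1..n. (F (real i / real n + s) / real n - integral {s + (real i - 1) / real n .. s + real i / real n} F)\<bar>"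
    by (simp add: I sum_divide_distrib sum_subtractf)
  also have "\<dots> \<le> (\<Sum>i=1..n. \<bar>F (real i / real n + s) / real n - integral {s + (real i - 1) / real n .. s + real i / real n} F\<bar>)"
    by (rule sum_abs)
  also have "\<dots> \<le> (\<Sum>i=1..n. e / real n)"
    by (rule sum_mono) (rule piece)
  also have "\<dots> = e" using n by simp
  finally show ?thesis .
qed

lemma uc_cont:
  fixes g :: "real \<Rightarrow> real"
  assumes uc: "\<And>e. e > 0 \<Longrightarrow> \<exists>d>0. \<forall>x y. \<bar>x - y\<bar> \<le> d \<longrightarrow> \<bar>g x - g y\<bar> \<le> e"
  shows "continuous_on A g"
  unfolding continuous_on_iff
proof (intro ballI allI impI)
  fix x e assume "x \<in> A" "(e::real) > 0"
  then obtain d where d: "d > 0" "\<forall>x y. \<bar>x - y\<bar> \<le> d \<longrightarrow> \<bar>g x - g y\<bar> \<le> e / 2"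
    using uc[of "e/2"] by auto
  show "\<exists>d>0. \<forall>x'\<in>A. dist x' x < d \<longrightarrow> dist (g x') (g x) < e"
  proof (intro exI[of _ d] conjI ballI impI)
    fix x' assume "dist x' x < d"
    then have "\<bar>g x' - g x\<bar> \<le> e / 2" using d by (simp add: dist_real_def)
    then show "dist (g x') (g x) < e" using \<open>e > 0\<close> by (simp add: dist_real_def)
  qed (use d in auto)
qed

lemma riemann2:
  fixes H :: "real \<Rightarrow> real \<Rightarrow> real"
  assumes perU: "\<And>u v. H (u+1) v = H u v" and perV: "\<And>u v. H u (v+1) = H u v"
   and uc: "\<And>e. e > 0 \<Longrightarrow> \<exists>d>0. \<forall>u u' v v'. \<bar>u - u'\<bar> \<le> d \<longrightarrow> \<bar>v - v'\<bar> \<le> d \<longrightarrow> \<bar>H u v - H u' v'\<bar> \<le> e"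
  shows "(\<lambda>n. (\<Sum>i=1..n. \<Sum>j=1..n. H (real i / real n + s) (real j / real n + s)) / (real n)^2)
     \<longlonglongrightarrow> integral {0..1} (\<lambda>u. integral {0..1} (H u))"
proof -
  define G where "G u = integral {0..1} (H u)" for u
  have contH: "continuous_on A (H u)" for A u
  proof (rule uc_cont)
    fix e :: real assume "e > 0"
    then obtain d where "d > 0" "\<forall>u u' v v'. \<bar>u - u'\<bar> \<le> d \<longrightarrow> \<bar>v - v'\<bar> \<le> d \<longrightarrow> \<bar>H u v - H u' v'\<bar> \<le> e"
      using uc by blast
    then show "\<exists>d>0. \<forall>x y. \<bar>x - y\<bar> \<le> d \<longrightarrow> \<bar>H u x - H u y\<bar> \<le> e" by auto
  qed
  have Gmod: "\<bar>G u - G u'\<bar> \<le> e" if "\<forall>v. \<bar>H u v - H u' v\<bar> \<le> e" for u u' e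
  proof -
    have "G u - G u' = integral {0..1} (\<lambda>v. H u v - H u' v)"
      unfolding G_def by (subst integral_diff) (auto intro!: integrable_continuous_real contH)
    also have "norm \<dots> \<le> e * (1 - 0)"
      by (rule integral_bound) (use that in \<open>auto intro!: continuous_intros contH\<close>)
    finally show ?thesis by simp
  qed
  have ucG: "\<exists>d>0. \<forall>x y. \<bar>x - y\<bar> \<le> d \<longrightarrow> \<bar>G x - G y\<bar> \<le> e" if e0: "e > 0" for e
  proof -
    obtain d where "d > 0" "\<forall>u u' v v'. \<bar>u - u'\<bar> \<le> d \<longrightarrow> \<bar>v - v'\<bar> \<le> d \<longrightarrow> \<bar>H u v - H u' v'\<bar> \<le> e"
      using uc[OF e0] by auto
    then show ?thesis by (intro exI[of _ d]) (auto intro!: Gmod)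
  qed
  have contG: "continuous_on UNIV G" by (rule uc_cont) (rule ucG)
  have perG: "G (u + 1) = G u" for u
  proof -
    have "H (u + 1) = H u" by (rule ext) (rule perU)
    then show ?thesis unfolding G_def by simp
  qed
  show ?thesis unfolding G_def[symmetric] LIMSEQ_iff
  proof (intro allI impI)
    fix r :: real assume r: "r > 0"
    define e where "e = r / 3"
    have e: "e > 0" using r by (simp add: e_def)
    obtain d where d: "d > 0" "\<forall>u u' v v'. \<bar>u - u'\<bar> \<le> d \<longrightarrow> \<bar>v - v'\<bar> \<le> d \<longrightarrow> \<bar>H u v - H u' v'\<bar> \<le> e"
      using uc[OF e] by auto
    obtain no :: nat where no: "1 / d < real no" using reals_Archimedean2 by blast
    have "norm ((\<Sum>i=1..n. \<Sum>j=1..n. H (real i / real n + s) (real j / real n + s)) / (real n)^2 - integral {0..1} G) < r"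
      if nno: "n \<ge> no" for n
    proof -
      have "1 / d < real n" using no nno by linarith
      then have npos: "real n > 0" using d(1) by (smt (verit) divide_pos_pos)
      then have n: "n > 0" by simp
      have "1 < d * real n" using \<open>1 / d < real n\<close> d(1) by (simp add: field_simps)
      then have nd: "1 / real n \<le> d" using npos by (simp add: field_simps)
      have inner: "\<bar>(\<Sum>j=1..n. H u (real j / real n + s)) / real n - G u\<bar> \<le> e" for u
        unfolding G_def
        by (rule riemann1[OF contH perV n]) (use d nd in auto)
      have outer: "\<bar>(\<Sum>i=1..n. G (real i / real n + s)) / real n - integral {0..1} G\<bar> \<le> e"
      proof (rule riemann1[OF contG perG n])
        fix x y :: real assume "\<bar>x - y\<bar> \<le> 1 / real n"
        then show "\<bar>G x - G y\<bar> \<le> e" using d nd by (intro Gmod) auto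
      qed
      have split: "(\<Sum>i=1..n. \<Sum>j=1..n. H (real i / real n + s) (real j / real n + s)) / (real n)^2 - integral {0..1} G
         = (\<Sum>i=1..n. ((\<Sum>j=1..n. H (real i / real n + s) (real j / real n + s)) / real n - G (real i / real n + s))) / real n
           + ((\<Sum>i=1..n. G (real i / real n + s)) / real n - integral {0..1} G)"
      proof -
        have a: "(\<Sum>i=1..n. \<Sum>j=1..n. H (real i / real n + s) (real j / real n + s)) / (real n)^2
           = (\<Sum>i=1..n. (\<Sum>j=1..n. H (real i / real n + s) (real j / real n + s)) / real n) / real n"
          by (simp add: sum_divide_distrib power2_eq_square)
        have b: "(\<Sum>i=1..n. ((\<Sum>j=1..n. H (real i / real n + s) (real j / real n + s)) / real n - G (real i / real n + s)))
           = (\<Sum>i=1..n. (\<Sum>j=1..n. H (real i / real n + s) (real j / real n + s)) / real n) - (\<Sum>i=1..n. G (real i / real n + s))"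
          by (rule sum_subtractf)
        show ?thesis unfolding a b by (simp add: diff_divide_distrib)
      qed
      have "\<bar>(\<Sum>i=1..n. ((\<Sum>j=1..n. H (real i / real n + s) (real j / real n + s)) / real n - G (real i / real n + s)))\<bar>
          \<le> (\<Sum>i=1..n. e)"
        by (rule order.trans[OF sum_abs sum_mono]) (rule inner)
      then have P: "\<bar>(\<Sum>i=1..n. ((\<Sum>j=1..n. H (real i / real n + s) (real j / real n + s)) / real n - G (real i / real n + s))) / real n\<bar> \<le> e"
        using n by (simp add: field_simps)
      show ?thesis unfolding split real_norm_def
        by (rule order.strict_trans1[OF abs_triangle_ineq]) (use P outer e e_def in linarith)
    qed
    then show "\<exists>no. \<forall>n\<ge>no. norm ((\<Sum>i=1..n. \<Sum>j=1..n. H (real i / real n + s) (real j / real n + s)) / (real n)^2 - integral {0..1} G) < r"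
      by blast
  qed
qed



locale setting = prob_space M for M :: "'a measure" +
  fixes f :: "real \<Rightarrow> real" and Z :: "nat \<Rightarrow> 'a \<Rightarrow> real" and \<phi> \<Phi> :: "real \<Rightarrow> real" and \<theta>s :: real
  assumes lip: "\<exists>L. lipschitz_on L UNIV f"
    and per: "\<forall>x. f (x + 1) = f x"
    and indep: "indep_vars (\<lambda>_. borel) Z UNIV"
    and dens: "\<And>i. distributed M lborel (Z i) (\<lambda>x. ennreal (\<phi> x))"
    and Phi_def: "\<And>t. \<Phi> t = measure M {\<omega> \<in> space M. Z 1 \<omega> \<le> t}"
    and phi_nonneg: "\<And>x. \<phi> x \<ge> 0"
begin

definition "Lf = (SOME L. lipschitz_on L UNIV f)"
definition "Bf = \<bar>f 0\<bar> + Lf"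
definition "D = density lborel (\<lambda>x. ennreal (\<phi> x))"

lemma Lf: "lipschitz_on Lf UNIV f"
  unfolding Lf_def using lip by (rule someI_ex)

lemma Lf_nonneg: "Lf \<ge> 0" using Lf by (simp add: lipschitz_on_def)

lemma f_lip: "\<bar>f x - f y\<bar> \<le> Lf * \<bar>x - y\<bar>"
  using Lf by (simp add: lipschitz_on_def dist_real_def)

lemma f_per: "f (x + 1) = f x" using per by simp

lemma f_int: "f (x + real_of_int k) = f x"
  by (rule per_int[where F=f]) (rule f_per)

lemma f_bound: "\<bar>f x\<bar> \<le> Bf"
proof -
  have "f x = f (x - real_of_int \<lfloor>x\<rfloor>)" by (rule per_frac[where F=f, symmetric]) (rule f_per)
  moreover have "\<bar>f (x - real_of_int \<lfloor>x\<rfloor>) - f 0\<bar> \<le> Lf * \<bar>x - real_of_int \<lfloor>x\<rfloor> - 0\<bar>" by (rule f_lip)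
  moreover have "\<bar>x - real_of_int \<lfloor>x\<rfloor> - 0\<bar> \<le> 1" by linarith
  moreover have "Lf * \<bar>x - real_of_int \<lfloor>x\<rfloor> - 0\<bar> \<le> Lf * 1"
    using Lf_nonneg calculation(3) by (rule mult_left_mono[rotated])
  ultimately show ?thesis unfolding Bf_def by linarith
qed

lemma Bf_nonneg: "Bf \<ge> 0" using f_bound[of 0] by linarith

lemma f_cont: "continuous_on A f"
  using lipschitz_on_continuous_on[OF Lf] continuous_on_subset by blast

lemma Z_meas[measurable]: "Z i \<in> borel_measurable M"
  using dens[of i] unfolding distributed_def by (simp add: measurable_lborel1)

lemma phi_meas[measurable]: "(\<lambda>x. ennreal (\<phi> x)) \<in> borel_measurable borel"
  using dens[of 0] unfolding distributed_def by simp

lemma distr_Z: "distr M borel (Z i) = D"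
proof -
  have "distr M borel (Z i) = distr M lborel (Z i)" by (rule distr_cong) auto
  also have "\<dots> = D" using dens[of i] unfolding distributed_def D_def by simp
  finally show ?thesis .
qed

lemma sets_D[measurable_cong]: "sets D = sets borel" unfolding D_def by simp
lemma space_D: "space D = UNIV" unfolding D_def by simp

lemma D_prob: "prob_space D"
  unfolding distr_Z[symmetric, of 0] by (rule prob_space_distr) simp

lemma Phi_D: "\<Phi> t = measure D {..t}"
proof -
  have "measure D {..t} = measure M (Z 1 -` {..t} \<inter> space M)"
    unfolding distr_Z[symmetric, of 1] by (rule measure_distr) auto
  then show ?thesis unfolding Phi_def by (auto intro!: arg_cong[where f="measure M"])
qed

lemma Phi_range: "0 \<le> \<Phi> t" "\<Phi> t \<le> 1"
  unfolding Phi_D using prob_space.prob_le_1[OF D_prob] by auto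

lemma Phi_mono: "s \<le> t \<Longrightarrow> \<Phi> s \<le> \<Phi> t"
  unfolding Phi_D by (rule finite_measure.finite_measure_mono[OF prob_space.finite_measure[OF D_prob]]) auto

lemma Phi_meas[measurable]: "\<Phi> \<in> borel_measurable borel"
  by (rule borel_measurable_mono) (auto simp: mono_def Phi_mono)

lemma D_real_distr: "real_distribution D"
  unfolding real_distribution_def real_distribution_axioms_def using D_prob sets_D by simp

lemma D_point: "measure D {x} = 0"
proof -
  have "emeasure D {x} = 0"
    unfolding D_def by (subst emeasure_density) (auto intro!: nn_integral_null_set)
  then show ?thesis by (simp add: measure_def)
qed

lemma Phi_cont: "isCont \<Phi> t"
proof -
  have "\<Phi> = cdf D" by (rule ext) (simp add: Phi_D cdf_def)
  then show ?thesis using finite_borel_measure.isCont_cdf[OF real_distribution.finite_borel_measure_M[OF D_real_distr]] D_point by simp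
qed

lemma phi_real_meas[measurable]: "\<phi> \<in> borel_measurable borel"
proof -
  have "\<phi> = (\<lambda>x. enn2real (ennreal (\<phi> x)))" using phi_nonneg by simp
  also have "\<dots> \<in> borel_measurable borel" by measurable
  finally show ?thesis .
qed

lemma Phi2_D: "Phi2 \<Phi> \<phi> t = (\<integral>a. \<Phi> (t + a) \<partial>D)"
proof -
  have "(\<integral>a. \<Phi> (t + a) \<partial>D) = (\<integral>a. \<phi> a *\<^sub>R \<Phi> (t + a) \<partial>lborel)"
    unfolding D_def by (rule integral_density) (auto simp: phi_nonneg)
  then show ?thesis unfolding Phi2_def by (simp add: mult.commute)
qed

lemma Phi_integrable: "integrable D (\<lambda>a. \<Phi> (t + a))"
  by (rule finite_measure.integrable_const_bound[OF prob_space.finite_measure[OF D_prob], where B=1])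
     (auto simp: Phi_range abs_le_iff intro: order.trans[OF _ Phi_range(2)] order.trans[OF Phi_range(1)])

lemma D_const_int: "integrable D (\<lambda>_. c::real)"
  by (rule finite_measure.integrable_const_bound[OF prob_space.finite_measure[OF D_prob], where B="\<bar>c\<bar>"]) auto

lemma Phi2_range: "0 \<le> Phi2 \<Phi> \<phi> t" "Phi2 \<Phi> \<phi> t \<le> 1"
proof -
  show "0 \<le> Phi2 \<Phi> \<phi> t" unfolding Phi2_D by (rule integral_nonneg_AE) (auto simp: Phi_range)
  have "(\<integral>a. \<Phi> (t + a) \<partial>D) \<le> (\<integral>a. 1 \<partial>D)"
    by (rule integral_mono[OF Phi_integrable D_const_int]) (auto simp: Phi_range)
  then show "Phi2 \<Phi> \<phi> t \<le> 1" unfolding Phi2_D using prob_space.prob_space[OF D_prob] by simp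
qed

lemma Phi2_cont: "isCont (Phi2 \<Phi> \<phi>) t"
proof (rule continuous_at_sequentiallyI)
  fix u assume u: "u \<longlonglongrightarrow> t"
  have "(\<lambda>i. \<integral>a. \<Phi> (u i + a) \<partial>D) \<longlonglongrightarrow> (\<integral>a. \<Phi> (t + a) \<partial>D)"
  proof (rule integral_dominated_convergence[where w="\<lambda>_. 1"])
    show "integrable D (\<lambda>_. 1::real)"
      by (rule D_const_int)
    show "AE a in D. (\<lambda>i. \<Phi> (u i + a)) \<longlonglongrightarrow> \<Phi> (t + a)"
      by (intro AE_I2 isCont_tendsto_compose[OF Phi_cont] tendsto_intros u)
    show "\<And>i. AE a in D. norm (\<Phi> (u i + a)) \<le> 1"
      using Phi_range by (auto simp: abs_le_iff intro: order.trans[OF _ Phi_range(2)] order.trans[OF Phi_range(1)])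
  qed auto
  then show "(\<lambda>i. Phi2 \<Phi> \<phi> (u i)) \<longlonglongrightarrow> Phi2 \<Phi> \<phi> t" unfolding Phi2_D .
qed

lemma indep_restrict_pair:
  assumes disj: "I1 \<inter> I2 = {}"
    and h1: "h1 \<in> borel_measurable (PiM I1 (\<lambda>_. borel))"
    and h2: "h2 \<in> borel_measurable (PiM I2 (\<lambda>_. borel))"
  shows "indep_var borel (\<lambda>\<omega>. h1 (restrict (\<lambda>i. Z i \<omega>) I1)) borel (\<lambda>\<omega>. h2 (restrict (\<lambda>i. Z i \<omega>) I2))"
proof -
  define K where "K = case_bool I1 I2"
  have 1: "indep_vars (\<lambda>b. PiM (K b) (\<lambda>_. borel)) (\<lambda>b \<omega>. restrict (\<lambda>i. Z i \<omega>) (K b)) UNIV"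
    by (rule indep_vars_restrict[OF indep]) (use disj in \<open>auto simp: disjoint_family_on_def K_def split: bool.split\<close>)
  have 2: "indep_vars (\<lambda>b. borel) (\<lambda>b \<omega>. case_bool h1 h2 b (restrict (\<lambda>i. Z i \<omega>) (K b))) UNIV"
    by (rule indep_vars_compose2[OF 1]) (use h1 h2 in \<open>auto simp: K_def split: bool.split\<close>)
  have e1: "case_bool borel borel = (\<lambda>b::bool. borel)" by (rule ext) (simp split: bool.split)
  have e2: "case_bool (\<lambda>\<omega>. h1 (restrict (\<lambda>i. Z i \<omega>) I1)) (\<lambda>\<omega>. h2 (restrict (\<lambda>i. Z i \<omega>) I2))
      = (\<lambda>b \<omega>. case_bool h1 h2 b (restrict (\<lambda>i. Z i \<omega>) (K b)))"
    by (rule ext) (simp add: K_def split: bool.split)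
  show ?thesis unfolding indep_var_def e1 e2 by (rule 2)
qed

lemma indep_Z2: assumes "i \<noteq> j" shows "indep_var borel (Z i) borel (Z j)"
proof -
  have "indep_var borel (\<lambda>\<omega>. (\<lambda>x. x i) (restrict (\<lambda>i. Z i \<omega>) {i})) borel (\<lambda>\<omega>. (\<lambda>x. x j) (restrict (\<lambda>i. Z i \<omega>) {j}))"
    by (rule indep_restrict_pair) (use assms in \<open>auto intro!: measurable_component_singleton\<close>)
  then show ?thesis by simp
qed

lemma indep_pairs:
  fixes u v :: "real \<Rightarrow> real \<Rightarrow> real"
  assumes disj: "{i, j} \<inter> {k, l} = {}"
    and u: "(\<lambda>p. u (fst p) (snd p)) \<in> borel_measurable (borel \<Otimes>\<^sub>M borel)"
    and v: "(\<lambda>p. v (fst p) (snd p)) \<in> borel_measurable (borel \<Otimes>\<^sub>M borel)"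
  shows "indep_var borel (\<lambda>\<omega>. u (Z i \<omega>) (Z j \<omega>)) borel (\<lambda>\<omega>. v (Z k \<omega>) (Z l \<omega>))"
proof -
  have m: "(\<lambda>x. w (x a) (x b)) \<in> borel_measurable (PiM {a, b} (\<lambda>_. borel))"
    if w: "(\<lambda>p. w (fst p) (snd p)) \<in> borel_measurable (borel \<Otimes>\<^sub>M borel)" for w :: "real \<Rightarrow> real \<Rightarrow> real" and a b
  proof -
    have "(\<lambda>x. (x a, x b)) \<in> measurable (PiM {a, b} (\<lambda>_. borel)) (borel \<Otimes>\<^sub>M borel)"
      by (intro measurable_Pair measurable_component_singleton) auto
    from measurable_comp[OF this w] show ?thesis by (simp add: comp_def)
  qed
  have "indep_var borel (\<lambda>\<omega>. (\<lambda>x. u (x i) (x j)) (restrict (\<lambda>i. Z i \<omega>) {i, j}))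
                  borel (\<lambda>\<omega>. (\<lambda>x. v (x k) (x l)) (restrict (\<lambda>i. Z i \<omega>) {k, l}))"
    by (rule indep_restrict_pair[OF disj m[OF u] m[OF v]])
  then show ?thesis by simp
qed

lemma pair_prob_D: "pair_prob_space D D"
  by (simp add: pair_prob_space_def pair_sigma_finite_def D_prob prob_space_imp_sigma_finite)

lemma prob_less: assumes ij: "i \<noteq> j"
  shows "expectation (\<lambda>\<omega>. if Z j \<omega> \<le> Z i \<omega> + c then 1 else 0) = Phi2 \<Phi> \<phi> c"
proof -
  define S where "S = {p::real \<times> real. snd p \<le> fst p + c}"
  have "S = {p \<in> space (borel \<Otimes>\<^sub>M borel). snd p \<le> fst p + c}" by (auto simp: S_def space_pair_measure)
  also have "\<dots> \<in> sets (borel \<Otimes>\<^sub>M borel)" by measurable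
  finally have S: "S \<in> sets (borel \<Otimes>\<^sub>M borel)" .
  have "expectation (\<lambda>\<omega>. if Z j \<omega> \<le> Z i \<omega> + c then 1 else 0::real) = expectation (\<lambda>\<omega>. indicator S (Z i \<omega>, Z j \<omega>))"
    by (rule arg_cong[where f=expectation]) (auto simp: S_def indicator_def)
  also have "\<dots> = integral\<^sup>L (distr M (borel \<Otimes>\<^sub>M borel) (\<lambda>\<omega>. (Z i \<omega>, Z j \<omega>))) (indicator S)"
    apply (subst Bochner_Integration.integral_distr)
    apply measurable
    using S apply simp
    apply simp
    done
  also have "distr M (borel \<Otimes>\<^sub>M borel) (\<lambda>\<omega>. (Z i \<omega>, Z j \<omega>)) = D \<Otimes>\<^sub>M D"
    using indep_Z2[OF ij] unfolding indep_var_distribution_eq distr_Z by simp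
  also have "integral\<^sup>L (D \<Otimes>\<^sub>M D) (indicator S) = (\<integral>a. (\<integral>b. indicator S (a, b) \<partial>D) \<partial>D :: real)"
  proof -
    interpret PP: pair_prob_space D D by (rule pair_prob_D)
    show ?thesis
    proof (rule PP.integral_fst'[symmetric])
      show "integrable (D \<Otimes>\<^sub>M D) (indicator S :: _ \<Rightarrow> real)"
        by (rule PP.P.integrable_const_bound[where B=1]) (use S in auto)
    qed
  qed
  also have "\<dots> = (\<integral>a. \<Phi> (c + a) \<partial>D)"
  proof (rule Bochner_Integration.integral_cong[OF refl])
    fix a
    have "(\<integral>b. indicator S (a, b) \<partial>D) = (\<integral>b. indicator {..a+c} b \<partial>D)"
      by (rule Bochner_Integration.integral_cong) (auto simp: S_def indicator_def)
    also have "\<dots> = measure D {..a+c}" by (simp add: space_D)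
    finally show "(\<integral>b. indicator S (a, b) \<partial>D) = \<Phi> (c + a)" by (simp add: Phi_D add.commute)
  qed
  also have "\<dots> = Phi2 \<Phi> \<phi> c" by (simp add: Phi2_D)
  finally show ?thesis .
qed

end


lemma count4: "(\<Sum>i\<in>{1..n}. \<Sum>j\<in>{1..n}. \<Sum>k\<in>{1..n}. \<Sum>l\<in>{1..n}.
   ((if i = k then 1 else 0) + (if i = l then 1 else 0) + (if j = k then 1 else 0) + (if j = l then 1 else 0)) :: real)
   = 4 * real n ^ 3"
proof -
  have m: "x * (if P then 1 else 0) = (if P then x else 0)" for x :: real and P by simp
  show ?thesis by (simp add: sum.distrib sum.delta sum.delta' power3_eq_cube m sum_distrib_left[symmetric])
qed

context prob_space begin

lemma int_bounded:
  fixes h :: "'a \<Rightarrow> real"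
  assumes "h \<in> borel_measurable M" "\<And>\<omega>. \<bar>h \<omega>\<bar> \<le> C"
  shows "integrable M h"
  by (rule integrable_const_bound[where B=C]) (use assms in auto)

lemma var_bound:
  fixes X :: "nat \<Rightarrow> nat \<Rightarrow> 'a \<Rightarrow> real" and c :: "nat \<Rightarrow> nat \<Rightarrow> real"
  assumes meas: "\<And>i j. X i j \<in> borel_measurable M"
   and bnd: "\<And>i j \<omega>. \<bar>X i j \<omega>\<bar> \<le> 1"
   and orth: "\<And>i j k l. {i,j} \<inter> {k,l} = {} \<Longrightarrow> expectation (\<lambda>\<omega>. X i j \<omega> * X k l \<omega>) = 0"
   and cb: "\<And>i j. \<bar>c i j\<bar> \<le> B"
  shows "expectation (\<lambda>\<omega>. (\<Sum>i\<in>{1..n}. \<Sum>j\<in>{1..n}. c i j * X i j \<omega>)\<^sup>2) \<le> 4 * B\<^sup>2 * real n ^ 3"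
proof -
  have intXX: "integrable M (\<lambda>\<omega>. X i j \<omega> * X k l \<omega>)" for i j k l
    by (rule int_bounded[where C=1]) (use meas bnd in \<open>auto simp: abs_mult intro: mult_le_one\<close>)
  have sq: "(\<Sum>i\<in>{1..n}. \<Sum>j\<in>{1..n}. c i j * X i j \<omega>)\<^sup>2
      = (\<Sum>i\<in>{1..n}. \<Sum>j\<in>{1..n}. \<Sum>k\<in>{1..n}. \<Sum>l\<in>{1..n}. (c i j * c k l) * (X i j \<omega> * X k l \<omega>))" for \<omega>
    apply (simp only: power2_eq_square sum_distrib_right)
    apply (simp only: sum_distrib_left)
    apply (simp add: mult_ac)
    done
  have E: "expectation (\<lambda>\<omega>. (\<Sum>i\<in>{1..n}. \<Sum>j\<in>{1..n}. c i j * X i j \<omega>)\<^sup>2)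
      = (\<Sum>i\<in>{1..n}. \<Sum>j\<in>{1..n}. \<Sum>k\<in>{1..n}. \<Sum>l\<in>{1..n}. (c i j * c k l) * expectation (\<lambda>\<omega>. X i j \<omega> * X k l \<omega>))"
    unfolding sq by (simp add: Bochner_Integration.integral_sum integrable_sum intXX)
  have tm: "(c i j * c k l) * expectation (\<lambda>\<omega>. X i j \<omega> * X k l \<omega>)
     \<le> B\<^sup>2 * ((if i = k then 1 else 0) + (if i = l then 1 else 0) + (if j = k then 1 else 0) + (if j = l then 1 else 0))"
    for i j k l
  proof (cases "{i,j} \<inter> {k,l} = {}")
    case True
    then show ?thesis using orth[OF True] by simp
  next
    case False
    have ov: "1 \<le> ((if i = k then 1 else 0) + (if i = l then 1 else 0) + (if j = k then 1 else 0) + (if j = l then 1 else (0::real)))"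
      using False by auto
    have "\<bar>expectation (\<lambda>\<omega>. X i j \<omega> * X k l \<omega>)\<bar> \<le> expectation (\<lambda>\<omega>. \<bar>X i j \<omega> * X k l \<omega>\<bar>)"
      by (rule integral_abs_bound)
    also have "\<dots> \<le> expectation (\<lambda>\<omega>. 1)"
      by (rule integral_mono[OF integrable_abs[OF intXX]]) (use bnd in \<open>auto simp: abs_mult intro: mult_le_one\<close>)
    also have "\<dots> = 1" by (simp add: prob_space)
    finally have e1: "\<bar>expectation (\<lambda>\<omega>. X i j \<omega> * X k l \<omega>)\<bar> \<le> 1" .
    have B0: "0 \<le> B" using cb[of i j] by linarith
    have "\<bar>c i j * c k l\<bar> \<le> B * B"
      unfolding abs_mult by (rule mult_mono) (use cb B0 in auto)
    then have "\<bar>c i j * c k l\<bar> * \<bar>expectation (\<lambda>\<omega>. X i j \<omega> * X k l \<omega>)\<bar> \<le> B * B * 1"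
      using e1 B0 by (intro mult_mono) auto
    moreover have "(c i j * c k l) * expectation (\<lambda>\<omega>. X i j \<omega> * X k l \<omega>) \<le> \<bar>c i j * c k l\<bar> * \<bar>expectation (\<lambda>\<omega>. X i j \<omega> * X k l \<omega>)\<bar>"
      by (metis abs_ge_self abs_mult)
    ultimately have "(c i j * c k l) * expectation (\<lambda>\<omega>. X i j \<omega> * X k l \<omega>) \<le> B * B * 1" by linarith
    also have "\<dots> \<le> B\<^sup>2 * ((if i = k then 1 else 0) + (if i = l then 1 else 0) + (if j = k then 1 else 0) + (if j = l then 1 else 0))"
      using mult_left_mono[OF ov, of "B*B"] by (simp add: power2_eq_square)
    finally show ?thesis .
  qed
  have "expectation (\<lambda>\<omega>. (\<Sum>i\<in>{1..n}. \<Sum>j\<in>{1..n}. c i j * X i j \<omega>)\<^sup>2)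
     \<le> (\<Sum>i\<in>{1..n}. \<Sum>j\<in>{1..n}. \<Sum>k\<in>{1..n}. \<Sum>l\<in>{1..n}.
          B\<^sup>2 * ((if i = k then 1 else 0) + (if i = l then 1 else 0) + (if j = k then 1 else 0) + (if j = l then 1 else 0)))"
    unfolding E by (intro sum_mono tm)
  also have "\<dots> = B\<^sup>2 * (4 * real n ^ 3)"
    unfolding count4[symmetric] by (simp add: sum_distrib_left)
  finally show ?thesis by simp
qed

end


lemma avg_bound:
  fixes a :: "nat \<Rightarrow> real" and w :: "nat \<Rightarrow> nat \<Rightarrow> real"
  assumes a: "\<And>i. \<bar>a i\<bar> \<le> K" and w: "\<And>i j. 0 \<le> w i j" "\<And>i j. w i j \<le> 1"
  shows "\<bar>(\<Sum>i\<in>{1..n}. \<Sum>j\<in>{1..n}. a i * w i j) / (real n)\<^sup>2\<bar> \<le> K"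
proof (cases "n = 0")
  case True then show ?thesis using a[of 0] by simp
next
  case False
  have "\<bar>\<Sum>i\<in>{1..n}. \<Sum>j\<in>{1..n}. a i * w i j\<bar> \<le> (\<Sum>i\<in>{1..n}. \<Sum>j\<in>{1..n}. \<bar>a i * w i j\<bar>)"
    by (rule order.trans[OF sum_abs sum_mono]) (rule sum_abs)
  also have "\<dots> \<le> (\<Sum>i\<in>{1..n}. \<Sum>j\<in>{1..n}. K)"
  proof (intro sum_mono)
    fix i j
    have "\<bar>a i\<bar> * \<bar>w i j\<bar> \<le> K * 1"
      using a[of i] w[of i j] by (intro mult_mono) auto
    then show "\<bar>a i * w i j\<bar> \<le> K" by (simp add: abs_mult)
  qed
  also have "\<dots> = K * (real n)\<^sup>2" by (simp add: power2_eq_square)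
  finally show ?thesis using False by (simp add: field_simps)
qed

context setting begin

definition g :: "nat \<Rightarrow> nat \<Rightarrow> real" where "g n i = f (real i / real n - \<theta>s)"
definition Ind :: "nat \<Rightarrow> 'a \<Rightarrow> nat \<Rightarrow> nat \<Rightarrow> real" where
  "Ind n \<omega> i j = (if g n j + Z j \<omega> \<le> g n i + Z i \<omega> then 1 else 0)"
definition Pij :: "nat \<Rightarrow> nat \<Rightarrow> nat \<Rightarrow> real" where
  "Pij n i j = (if i = j then 1 else Phi2 \<Phi> \<phi> (g n i - g n j))"
definition Mh :: "nat \<Rightarrow> real \<Rightarrow> 'a \<Rightarrow> real" where
  "Mh n \<theta> \<omega> = (\<Sum>i\<in>{1..n}. \<Sum>j\<in>{1..n}. f (real i / real n - \<theta>) * Ind n \<omega> i j) / (real n)\<^sup>2"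
definition mn :: "nat \<Rightarrow> real \<Rightarrow> real" where
  "mn n \<theta> = (\<Sum>i\<in>{1..n}. \<Sum>j\<in>{1..n}. f (real i / real n - \<theta>) * Pij n i j) / (real n)\<^sup>2"
definition Xc :: "nat \<Rightarrow> nat \<Rightarrow> nat \<Rightarrow> 'a \<Rightarrow> real" where
  "Xc n i j \<omega> = Ind n \<omega> i j - Pij n i j"

lemma Ind_meas[measurable]: "(\<lambda>\<omega>. Ind n \<omega> i j) \<in> borel_measurable M"
  unfolding Ind_def by measurable

lemma Xc_meas[measurable]: "Xc n i j \<in> borel_measurable M"
  unfolding Xc_def[abs_def] by measurable

lemma Mh_meas[measurable]: "Mh n \<theta> \<in> borel_measurable M"
  unfolding Mh_def[abs_def] by measurable

lemma Ind_range: "0 \<le> Ind n \<omega> i j" "Ind n \<omega> i j \<le> 1" by (auto simp: Ind_def)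

lemma Pij_range: "0 \<le> Pij n i j" "Pij n i j \<le> 1" by (auto simp: Pij_def Phi2_range)

lemma Xc_bnd: "\<bar>Xc n i j \<omega>\<bar> \<le> 1"
  using Ind_range[of n \<omega> i j] Pij_range[of n i j] by (auto simp: Xc_def)

lemma E_Ind: "expectation (\<lambda>\<omega>. Ind n \<omega> i j) = Pij n i j"
proof (cases "i = j")
  case True then show ?thesis by (simp add: Ind_def Pij_def prob_space)
next
  case False
  have "(\<lambda>\<omega>. Ind n \<omega> i j) = (\<lambda>\<omega>. if Z j \<omega> \<le> Z i \<omega> + (g n i - g n j) then 1 else 0)"
    by (rule ext) (auto simp: Ind_def)
  then show ?thesis using prob_less[OF False] False by (simp add: Pij_def)
qed

lemma int_Ind: "integrable M (\<lambda>\<omega>. Ind n \<omega> i j)"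
  by (rule int_bounded[where C=1]) (auto simp: Ind_def)

lemma E_Xc: "expectation (Xc n i j) = 0"
  unfolding Xc_def[abs_def] using int_Ind[of n i j]
  by (simp add: Bochner_Integration.integral_diff E_Ind prob_space)

lemma orth: assumes disj: "{i, j} \<inter> {k, l} = {}"
  shows "expectation (\<lambda>\<omega>. Xc n i j \<omega> * Xc n k l \<omega>) = 0"
proof -
  define u where "u a b = (if g n j + b \<le> g n i + a then 1 else 0) - Pij n i j" for a b :: real
  define v where "v a b = (if g n l + b \<le> g n k + a then 1 else 0) - Pij n k l" for a b :: real
  have um: "(\<lambda>p. u (fst p) (snd p)) \<in> borel_measurable (borel \<Otimes>\<^sub>M borel)"
    unfolding u_def by measurable
  have vm: "(\<lambda>p. v (fst p) (snd p)) \<in> borel_measurable (borel \<Otimes>\<^sub>M borel)"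
    unfolding v_def by measurable
  have e1: "(\<lambda>\<omega>. u (Z i \<omega>) (Z j \<omega>)) = Xc n i j" by (rule ext) (simp add: u_def Xc_def Ind_def)
  have e2: "(\<lambda>\<omega>. v (Z k \<omega>) (Z l \<omega>)) = Xc n k l" by (rule ext) (simp add: v_def Xc_def Ind_def)
  have ind: "indep_var borel (Xc n i j) borel (Xc n k l)"
    using indep_pairs[OF disj um vm] unfolding e1 e2 .
  have int: "integrable M (Xc n a b)" for a b
    by (rule int_bounded[where C=1]) (auto simp: Xc_bnd)
  have "expectation (\<lambda>\<omega>. Xc n i j \<omega> * Xc n k l \<omega>) = expectation (Xc n i j) * expectation (Xc n k l)"
    by (rule indep_var_lebesgue_integral[OF ind int int])
  then show ?thesis by (simp add: E_Xc)
qed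

lemma card_Ind: "real (card {j \<in> {1..n}. g n j + Z j \<omega> \<le> g n i + Z i \<omega>}) = (\<Sum>j\<in>{1..n}. Ind n \<omega> i j)"
proof -
  have "real (card {j \<in> {1..n}. g n j + Z j \<omega> \<le> g n i + Z i \<omega>}) = (\<Sum>j\<in>{j \<in> {1..n}. g n j + Z j \<omega> \<le> g n i + Z i \<omega>}. 1)"
    by simp
  also have "\<dots> = (\<Sum>j\<in>{1..n}. Ind n \<omega> i j)"
    by (subst sum.inter_filter) (auto simp: Ind_def)
  finally show ?thesis .
qed

lemma Mhat_eq: "Mhat f (\<lambda>i. g n i + Z i \<omega>) n \<theta> = Mh n \<theta> \<omega>"
proof -
  have "Mhat f (\<lambda>i. g n i + Z i \<omega>) n \<theta> = (1 / real n) * (\<Sum>i = 1..n. ((\<Sum>j\<in>{1..n}. Ind n \<omega> i j) / real n) * f (real i / real n - \<theta>))"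
    unfolding Mhat_def rank_def card_Ind by simp
  also have "\<dots> = (\<Sum>i = 1..n. (\<Sum>j\<in>{1..n}. f (real i / real n - \<theta>) * Ind n \<omega> i j)) / (real n)\<^sup>2"
    by (simp add: sum_distrib_left sum_divide_distrib power2_eq_square mult_ac)
  finally show ?thesis unfolding Mh_def .
qed

lemma dev_eq: "Mh n \<theta> \<omega> - mn n \<theta> = (\<Sum>i\<in>{1..n}. \<Sum>j\<in>{1..n}. f (real i / real n - \<theta>) * Xc n i j \<omega>) / (real n)\<^sup>2"
  by (simp add: Mh_def mn_def Xc_def diff_divide_distrib[symmetric] sum_subtractf[symmetric] right_diff_distrib)

lemma Mh_bound: "\<bar>Mh n \<theta> \<omega>\<bar> \<le> Bf"
  unfolding Mh_def by (rule avg_bound) (auto simp: f_bound Ind_range)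

lemma mn_bound: "\<bar>mn n \<theta>\<bar> \<le> Bf"
  unfolding mn_def by (rule avg_bound) (auto simp: f_bound Pij_range)

lemma dev_sq: assumes n: "n > 0"
  shows "expectation (\<lambda>\<omega>. (Mh n \<theta> \<omega> - mn n \<theta>)\<^sup>2) \<le> 4 * Bf\<^sup>2 / real n"
proof -
  let ?S = "\<lambda>\<omega>. (\<Sum>i\<in>{1..n}. \<Sum>j\<in>{1..n}. f (real i / real n - \<theta>) * Xc n i j \<omega>)"
  have "expectation (\<lambda>\<omega>. (Mh n \<theta> \<omega> - mn n \<theta>)\<^sup>2) = expectation (\<lambda>\<omega>. (?S \<omega>)\<^sup>2 / (real n)^4)"
    unfolding dev_eq by (simp add: power_divide power_mult[symmetric])
  also have "\<dots> = expectation (\<lambda>\<omega>. (?S \<omega>)\<^sup>2) / (real n)^4"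
    by (rule Bochner_Integration.integral_divide_zero)
  also have "\<dots> \<le> (4 * Bf\<^sup>2 * real n ^ 3) / (real n)^4"
    by (rule divide_right_mono[OF var_bound]) (auto simp: Xc_bnd orth f_bound)
  also have "\<dots> = 4 * Bf\<^sup>2 / real n" using n by (simp add: power_eq_if)
  finally show ?thesis .
qed

lemma cheb: assumes n: "n > 0" and d: "\<delta> > 0"
  shows "prob {\<omega> \<in> space M. \<delta> \<le> \<bar>Mh n \<theta> \<omega> - mn n \<theta>\<bar>} \<le> 4 * Bf\<^sup>2 / (real n * \<delta>\<^sup>2)"
proof -
  have eq: "{\<omega> \<in> space M. \<delta> \<le> \<bar>Mh n \<theta> \<omega> - mn n \<theta>\<bar>} = {\<omega> \<in> space M. \<delta>\<^sup>2 \<le> (Mh n \<theta> \<omega> - mn n \<theta>)\<^sup>2}"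
    using d by (auto simp: abs_le_square_iff[symmetric])
  have int: "integrable M (\<lambda>\<omega>. (Mh n \<theta> \<omega> - mn n \<theta>)\<^sup>2)"
  proof (rule int_bounded[where C="(2*Bf)\<^sup>2"])
    show "(\<lambda>\<omega>. (Mh n \<theta> \<omega> - mn n \<theta>)\<^sup>2) \<in> borel_measurable M" by measurable
    fix \<omega>
    have "\<bar>Mh n \<theta> \<omega> - mn n \<theta>\<bar> \<le> 2 * Bf" using Mh_bound[of n \<theta> \<omega>] mn_bound[of n \<theta>] by linarith
    then have "\<bar>Mh n \<theta> \<omega> - mn n \<theta>\<bar>\<^sup>2 \<le> (2 * Bf)\<^sup>2" by (rule power_mono) simp
    then show "\<bar>(Mh n \<theta> \<omega> - mn n \<theta>)\<^sup>2\<bar> \<le> (2 * Bf)\<^sup>2" by simp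
  qed
  have "prob {\<omega> \<in> space M. \<delta>\<^sup>2 \<le> (Mh n \<theta> \<omega> - mn n \<theta>)\<^sup>2} \<le> expectation (\<lambda>\<omega>. (Mh n \<theta> \<omega> - mn n \<theta>)\<^sup>2) / \<delta>\<^sup>2"
    by (rule integral_Markov_inequality_measure[OF int, where A="space M"]) (use d in auto)
  also have "\<dots> \<le> (4 * Bf\<^sup>2 / real n) / \<delta>\<^sup>2"
    by (rule divide_right_mono[OF dev_sq[OF n]]) simp
  finally show ?thesis unfolding eq by (simp add: field_simps)
qed

end


lemma G_cont:
  fixes H :: "real \<Rightarrow> real \<Rightarrow> real"
  assumes uc: "\<And>e. e > 0 \<Longrightarrow> \<exists>d>0. \<forall>u u' v v'. \<bar>u - u'\<bar> \<le> d \<longrightarrow> \<bar>v - v'\<bar> \<le> d \<longrightarrow> \<bar>H u v - H u' v'\<bar> \<le> e"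
  shows "continuous_on A (\<lambda>u. integral {0..1} (H u))" "continuous_on A (H u)"
proof -
  show contH: "continuous_on A (H u)" for A u
  proof (rule uc_cont)
    fix e :: real assume "e > 0"
    then obtain d where "d > 0" "\<forall>u u' v v'. \<bar>u - u'\<bar> \<le> d \<longrightarrow> \<bar>v - v'\<bar> \<le> d \<longrightarrow> \<bar>H u v - H u' v'\<bar> \<le> e"
      using uc by blast
    then show "\<exists>d>0. \<forall>x y. \<bar>x - y\<bar> \<le> d \<longrightarrow> \<bar>H u x - H u y\<bar> \<le> e" by auto
  qed
  have Gmod: "\<bar>integral {0..1} (H u) - integral {0..1} (H u')\<bar> \<le> e" if "\<forall>v. \<bar>H u v - H u' v\<bar> \<le> e" for u u' e
  proof -
    have "integral {0..1} (H u) - integral {0..1} (H u') = integral {0..1} (\<lambda>v. H u v - H u' v)"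
      by (subst integral_diff) (auto intro!: integrable_continuous_real contH)
    also have "norm \<dots> \<le> e * (1 - 0)"
      by (rule integral_bound) (use that in \<open>auto intro!: continuous_intros contH\<close>)
    finally show ?thesis by simp
  qed
  show "continuous_on A (\<lambda>u. integral {0..1} (H u))"
  proof (rule uc_cont)
    fix e :: real assume e0: "e > 0"
    obtain d where "d > 0" "\<forall>u u' v v'. \<bar>u - u'\<bar> \<le> d \<longrightarrow> \<bar>v - v'\<bar> \<le> d \<longrightarrow> \<bar>H u v - H u' v'\<bar> \<le> e"
      using uc[OF e0] by auto
    then show "\<exists>d>0. \<forall>x y. \<bar>x - y\<bar> \<le> d \<longrightarrow> \<bar>integral {0..1} (H x) - integral {0..1} (H y)\<bar> \<le> e"
      by (intro exI[of _ d]) (auto intro!: Gmod)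
  qed
qed

context setting begin

definition HH :: "real \<Rightarrow> real \<Rightarrow> real \<Rightarrow> real" where
  "HH \<theta> u v = Phi2 \<Phi> \<phi> (f u - f v) * f (u + \<theta>s - \<theta>)"

lemma HH_perU: "HH \<theta> (u + 1) v = HH \<theta> u v"
proof -
  have "u + 1 + \<theta>s - \<theta> = (u + \<theta>s - \<theta>) + 1" by simp
  then show ?thesis unfolding HH_def by (simp only: f_per)
qed

lemma HH_perV: "HH \<theta> u (v + 1) = HH \<theta> u v"
  unfolding HH_def by (simp only: f_per)

lemma Phi2_uc: "uniformly_continuous_on {-2*Bf..2*Bf} (Phi2 \<Phi> \<phi>)"
  by (rule compact_uniformly_continuous) (auto intro!: continuous_at_imp_continuous_on Phi2_cont)

lemma HH_uc: assumes e: "e > 0"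
  shows "\<exists>d>0. \<forall>u u' v v'. \<bar>u - u'\<bar> \<le> d \<longrightarrow> \<bar>v - v'\<bar> \<le> d \<longrightarrow> \<bar>HH \<theta> u v - HH \<theta> u' v'\<bar> \<le> e"
proof -
  define e1 where "e1 = e / (2 * (Bf + 1))"
  have e1: "e1 > 0" using e Bf_nonneg by (simp add: e1_def)
  obtain d1 where d1: "d1 > 0" "\<forall>x\<in>{-2*Bf..2*Bf}. \<forall>x'\<in>{-2*Bf..2*Bf}. dist x' x < d1 \<longrightarrow> dist (Phi2 \<Phi> \<phi> x') (Phi2 \<Phi> \<phi> x) < e1"
    using Phi2_uc e1 unfolding uniformly_continuous_on_def by blast
  define d where "d = min (d1 / (2 * (Lf + 1))) (e / (2 * (Lf + 1)))"
  have d: "d > 0" using d1 e Lf_nonneg by (simp add: d_def)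
  have Ld1: "2 * Lf * d < d1"
  proof -
    have "2 * Lf * d \<le> 2 * Lf * (d1 / (2 * (Lf + 1)))"
      using Lf_nonneg by (intro mult_left_mono) (auto simp: d_def)
    also have "\<dots> < d1" using Lf_nonneg d1 by (simp add: field_simps)
    finally show ?thesis .
  qed
  have Ld2: "Lf * d \<le> e / 2"
  proof -
    have "Lf * d \<le> Lf * (e / (2 * (Lf + 1)))"
      using Lf_nonneg by (intro mult_left_mono) (auto simp: d_def)
    also have "\<dots> \<le> e / 2" using Lf_nonneg e by (simp add: field_simps)
    finally show ?thesis .
  qed
  have eB: "e1 * Bf \<le> e / 2" using Bf_nonneg e by (simp add: e1_def field_simps)
  show ?thesis
  proof (intro exI[of _ d] conjI allI impI d)
    fix u u' v v' assume uu: "\<bar>u - u'\<bar> \<le> d" and vv: "\<bar>v - v'\<bar> \<le> d"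
    let ?a = "f u - f v" and ?a' = "f u' - f v'"
    have ain: "?a \<in> {-2*Bf..2*Bf}" "?a' \<in> {-2*Bf..2*Bf}"
      using f_bound[of u] f_bound[of v] f_bound[of u'] f_bound[of v'] by auto
    have "\<bar>f u - f u'\<bar> \<le> Lf * d" using f_lip[of u u'] uu Lf_nonneg by (meson mult_left_mono order.trans)
    moreover have "\<bar>f v - f v'\<bar> \<le> Lf * d" using f_lip[of v v'] vv Lf_nonneg by (meson mult_left_mono order.trans)
    ultimately have "dist ?a ?a' < d1" using Ld1 by (simp add: dist_real_def)
    then have P: "\<bar>Phi2 \<Phi> \<phi> ?a - Phi2 \<Phi> \<phi> ?a'\<bar> < e1" using d1(2) ain by (auto simp: dist_real_def)
    have F: "\<bar>f (u + \<theta>s - \<theta>) - f (u' + \<theta>s - \<theta>)\<bar> \<le> Lf * d"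
      using f_lip[of "u + \<theta>s - \<theta>" "u' + \<theta>s - \<theta>"] uu Lf_nonneg by (simp add: mult_left_mono order.trans)
    have "HH \<theta> u v - HH \<theta> u' v' = (Phi2 \<Phi> \<phi> ?a - Phi2 \<Phi> \<phi> ?a') * f (u + \<theta>s - \<theta>)
        + Phi2 \<Phi> \<phi> ?a' * (f (u + \<theta>s - \<theta>) - f (u' + \<theta>s - \<theta>))"
      unfolding HH_def by (simp add: algebra_simps)
    also have "\<bar>\<dots>\<bar> \<le> e1 * Bf + 1 * (Lf * d)"
    proof (rule order.trans[OF abs_triangle_ineq add_mono])
      show "\<bar>(Phi2 \<Phi> \<phi> ?a - Phi2 \<Phi> \<phi> ?a') * f (u + \<theta>s - \<theta>)\<bar> \<le> e1 * Bf"
        unfolding abs_mult using P f_bound by (intro mult_mono) auto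
      show "\<bar>Phi2 \<Phi> \<phi> ?a' * (f (u + \<theta>s - \<theta>) - f (u' + \<theta>s - \<theta>))\<bar> \<le> 1 * (Lf * d)"
        unfolding abs_mult using F Phi2_range[of ?a'] by (intro mult_mono) auto
    qed
    also have "\<dots> \<le> e" using eB Ld2 by simp
    finally show "\<bar>HH \<theta> u v - HH \<theta> u' v'\<bar> \<le> e" .
  qed
qed

lemma HH_cont: "continuous_on A (\<lambda>u. integral {0..1} (HH \<theta> u))" "continuous_on A (HH \<theta> u)"
  using G_cont[of "HH \<theta>", OF HH_uc] by auto

lemma Mpop_eq: "Mpop f \<Phi> \<phi> \<theta>s \<theta> = integral {0..1} (\<lambda>u. integral {0..1} (HH \<theta> u))"
proof -
  have inner: "(LBINT x=0..1. HH \<theta> u x) = integral {0..1} (HH \<theta> u)" for u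
  proof -
    have "interval_lebesgue_integral lborel (ereal 0) (ereal 1) (HH \<theta> u) = integral {0..1} (HH \<theta> u)"
      by (rule interval_integral_eq_integral) (auto intro!: borel_integrable_atLeastAtMost' HH_cont)
    then show ?thesis by (simp add: zero_ereal_def one_ereal_def)
  qed
  have "Mpop f \<Phi> \<phi> \<theta>s \<theta> = (LBINT u=0..1. integral {0..1} (HH \<theta> u))"
    unfolding Mpop_def inner[symmetric] HH_def ..
  also have "\<dots> = integral {0..1} (\<lambda>u. integral {0..1} (HH \<theta> u))"
  proof -
    have "interval_lebesgue_integral lborel (ereal 0) (ereal 1) (\<lambda>u. integral {0..1} (HH \<theta> u)) = integral {0..1} (\<lambda>u. integral {0..1} (HH \<theta> u))"
      by (rule interval_integral_eq_integral) (auto intro!: borel_integrable_atLeastAtMost' HH_cont)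
    then show ?thesis by (simp add: zero_ereal_def one_ereal_def)
  qed
  finally show ?thesis .
qed

lemma R_lim: "(\<lambda>n. (\<Sum>i=1..n. \<Sum>j=1..n. HH \<theta> (real i / real n - \<theta>s) (real j / real n - \<theta>s)) / (real n)^2)
     \<longlonglongrightarrow> Mpop f \<Phi> \<phi> \<theta>s \<theta>"
  using riemann2[of "HH \<theta>" "-\<theta>s", OF HH_perU HH_perV HH_uc] unfolding Mpop_eq by simp

lemma mn_R: "\<bar>mn n \<theta> - (\<Sum>i=1..n. \<Sum>j=1..n. HH \<theta> (real i / real n - \<theta>s) (real j / real n - \<theta>s)) / (real n)^2\<bar> \<le> Bf / real n"
proof -
  have t: "f (real i / real n - \<theta>) * Pij n i j - HH \<theta> (real i / real n - \<theta>s) (real j / real n - \<theta>s)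
      = (if j = i then f (real i / real n - \<theta>) * (1 - Phi2 \<Phi> \<phi> 0) else 0)" for i j
    by (auto simp: Pij_def HH_def g_def algebra_simps)
  have "mn n \<theta> - (\<Sum>i=1..n. \<Sum>j=1..n. HH \<theta> (real i / real n - \<theta>s) (real j / real n - \<theta>s)) / (real n)^2
     = (\<Sum>i=1..n. f (real i / real n - \<theta>) * (1 - Phi2 \<Phi> \<phi> 0)) / (real n)^2"
    unfolding mn_def diff_divide_distrib[symmetric] sum_subtractf[symmetric] t
    by (simp add: sum.delta)
  also have "\<bar>\<dots>\<bar> \<le> (\<Sum>i=1..n. Bf) / (real n)^2"
  proof -
    have "\<bar>\<Sum>i=1..n. f (real i / real n - \<theta>) * (1 - Phi2 \<Phi> \<phi> 0)\<bar> \<le> (\<Sum>i=1..n. Bf)"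
    proof (rule order.trans[OF sum_abs sum_mono])
      fix i
      have "\<bar>f (real i / real n - \<theta>)\<bar> * \<bar>1 - Phi2 \<Phi> \<phi> 0\<bar> \<le> Bf * 1"
        using f_bound Phi2_range[of 0] Bf_nonneg by (intro mult_mono) auto
      then show "\<bar>f (real i / real n - \<theta>) * (1 - Phi2 \<Phi> \<phi> 0)\<bar> \<le> Bf" by (simp add: abs_mult)
    qed
    then show ?thesis by (simp add: divide_right_mono)
  qed
  also have "\<dots> = Bf / real n" by (simp add: power2_eq_square)
  finally show ?thesis .
qed

lemma mn_lim: "(\<lambda>n. mn n \<theta>) \<longlonglongrightarrow> Mpop f \<Phi> \<phi> \<theta>s \<theta>"
proof -
  let ?R = "\<lambda>n. (\<Sum>i=1..n. \<Sum>j=1..n. HH \<theta> (real i / real n - \<theta>s) (real j / real n - \<theta>s)) / (real n)^2"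
  have "(\<lambda>n. mn n \<theta> - ?R n) \<longlonglongrightarrow> 0"
  proof (rule tendsto_sandwich[where f="\<lambda>n. - (Bf / real n)" and h="\<lambda>n. Bf / real n"])
    show "\<forall>\<^sub>F n in sequentially. - (Bf / real n) \<le> mn n \<theta> - ?R n"
    proof (rule always_eventually, rule allI)
      fix n show "- (Bf / real n) \<le> mn n \<theta> - ?R n" using mn_R[of n \<theta>] by (simp add: abs_le_iff)
    qed
    show "\<forall>\<^sub>F n in sequentially. mn n \<theta> - ?R n \<le> Bf / real n"
    proof (rule always_eventually, rule allI)
      fix n show "mn n \<theta> - ?R n \<le> Bf / real n" using mn_R[of n \<theta>] by (simp add: abs_le_iff)
    qed
    show "(\<lambda>n. - (Bf / real n)) \<longlonglongrightarrow> 0" using tendsto_minus[OF lim_const_over_n[of Bf]] by simp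
    show "(\<lambda>n. Bf / real n) \<longlonglongrightarrow> 0" by (rule lim_const_over_n)
  qed
  from tendsto_add[OF this R_lim[of \<theta>]] show ?thesis by simp
qed

end


lemma sup_grid:
  fixes G :: "real \<Rightarrow> real" and N :: nat
  assumes bnd: "\<And>\<theta>. \<bar>G \<theta>\<bar> \<le> C" and lipG: "\<And>\<theta> \<theta>'. \<bar>G \<theta> - G \<theta>'\<bar> \<le> K * \<bar>\<theta> - \<theta>'\<bar>"
    and per: "\<And>\<theta>. G (\<theta> + 1) = G \<theta>" and N: "N > 0" and K0: "K \<ge> 0" and KN: "K / real N \<le> \<epsilon> / 2"
    and sup: "(SUP \<theta>. G \<theta>) > \<epsilon>"
  shows "\<exists>k\<in>{0..<N}. G (real k / real N) > \<epsilon> / 2"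
proof -
  have bdd: "bdd_above (range G)" using bnd by (intro bdd_aboveI[where M=C]) (auto simp: abs_le_iff)
  obtain \<theta> where th: "G \<theta> > \<epsilon>" using sup less_cSUP_iff[OF _ bdd, of \<epsilon>] by auto
  define t where "t = \<theta> - real_of_int \<lfloor>\<theta>\<rfloor>"
  have t0: "0 \<le> t" and t1: "t < 1" unfolding t_def by linarith+
  have Gt: "G t = G \<theta>" unfolding t_def by (rule per_frac[where F=G]) (rule per)
  define k where "k = nat \<lfloor>t * real N\<rfloor>"
  have tN0: "0 \<le> t * real N" using t0 by simp
  have tN1: "t * real N < real N" using t1 N by simp
  have kle: "real k \<le> t * real N" unfolding k_def using tN0 by linarith
  have kgt: "t * real N < real k + 1" unfolding k_def using tN0 by linarith
  have "real k < real N" using kle tN1 by linarith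
  then have kN: "k < N" by simp
  have dist: "\<bar>t - real k / real N\<bar> \<le> 1 / real N"
  proof -
    have "real k / real N \<le> t" using kle N by (simp add: field_simps)
    moreover have "t < (real k + 1) / real N" using kgt N by (simp add: field_simps)
    moreover have "(real k + 1) / real N = real k / real N + 1 / real N" by (simp add: add_divide_distrib)
    ultimately show ?thesis by (simp add: abs_le_iff)
  qed
  have "\<bar>G t - G (real k / real N)\<bar> \<le> K * \<bar>t - real k / real N\<bar>" by (rule lipG)
  also have "\<dots> \<le> K * (1 / real N)" using dist K0 by (rule mult_left_mono)
  also have "\<dots> \<le> \<epsilon> / 2" using KN by simp
  finally have "G (real k / real N) > \<epsilon> / 2" using th Gt by linarith
  then show ?thesis using kN by auto
qed

context setting begin

lemma f_shift1: "f (x - (\<theta> + 1)) = f (x - \<theta>)"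
proof -
  have "f (x - (\<theta> + 1) + 1) = f (x - (\<theta> + 1))" by (rule f_per)
  then show ?thesis by simp
qed

lemma Mh_per: "Mh n (\<theta> + 1) \<omega> = Mh n \<theta> \<omega>" unfolding Mh_def f_shift1 ..
lemma mn_per: "mn n (\<theta> + 1) = mn n \<theta>" unfolding mn_def f_shift1 ..

lemma f_diff_lip: "\<bar>f (x - \<theta>) - f (x - \<theta>')\<bar> \<le> Lf * \<bar>\<theta> - \<theta>'\<bar>"
  using f_lip[of "x - \<theta>" "x - \<theta>'"] by (simp add: abs_minus_commute)

lemma Mh_lip: "\<bar>Mh n \<theta> \<omega> - Mh n \<theta>' \<omega>\<bar> \<le> Lf * \<bar>\<theta> - \<theta>'\<bar>"
proof -
  have "Mh n \<theta> \<omega> - Mh n \<theta>' \<omega> = (\<Sum>i\<in>{1..n}. \<Sum>j\<in>{1..n}. (f (real i / real n - \<theta>) - f (real i / real n - \<theta>')) * Ind n \<omega> i j) / (real n)\<^sup>2"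
    by (simp add: Mh_def diff_divide_distrib[symmetric] sum_subtractf[symmetric] left_diff_distrib)
  also have "\<bar>\<dots>\<bar> \<le> Lf * \<bar>\<theta> - \<theta>'\<bar>" by (rule avg_bound) (auto simp: f_diff_lip Ind_range)
  finally show ?thesis .
qed

lemma mn_lip: "\<bar>mn n \<theta> - mn n \<theta>'\<bar> \<le> Lf * \<bar>\<theta> - \<theta>'\<bar>"
proof -
  have "mn n \<theta> - mn n \<theta>' = (\<Sum>i\<in>{1..n}. \<Sum>j\<in>{1..n}. (f (real i / real n - \<theta>) - f (real i / real n - \<theta>')) * Pij n i j) / (real n)\<^sup>2"
    by (simp add: mn_def diff_divide_distrib[symmetric] sum_subtractf[symmetric] left_diff_distrib)
  also have "\<bar>\<dots>\<bar> \<le> Lf * \<bar>\<theta> - \<theta>'\<bar>" by (rule avg_bound) (auto simp: f_diff_lip Pij_range)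
  finally show ?thesis .
qed

abbreviation "Mp \<equiv> Mpop f \<Phi> \<phi> \<theta>s"

lemma Mp_lip: "\<bar>Mp \<theta> - Mp \<theta>'\<bar> \<le> Lf * \<bar>\<theta> - \<theta>'\<bar>"
  using tendsto_rabs[OF tendsto_diff[OF mn_lim[of \<theta>] mn_lim[of \<theta>']]]
  by (rule LIMSEQ_le_const2) (auto intro: mn_lip)

lemma Mp_bound: "\<bar>Mp \<theta>\<bar> \<le> Bf"
  using tendsto_rabs[OF mn_lim[of \<theta>]] by (rule LIMSEQ_le_const2) (auto intro: mn_bound)

lemma Mp_per: "Mp (\<theta> + 1) = Mp \<theta>"
  using mn_lim[of "\<theta> + 1"] mn_lim[of \<theta>] unfolding mn_per by (rule LIMSEQ_unique)

definition Gf :: "nat \<Rightarrow> real \<Rightarrow> 'a \<Rightarrow> real" where "Gf n \<theta> \<omega> = \<bar>Mh n \<theta> \<omega> - Mp \<theta>\<bar>"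

lemma Gf_bound: "\<bar>Gf n \<theta> \<omega>\<bar> \<le> 2 * Bf"
  using Mh_bound[of n \<theta> \<omega>] Mp_bound[of \<theta>] unfolding Gf_def by linarith

lemma Gf_lip: "\<bar>Gf n \<theta> \<omega> - Gf n \<theta>' \<omega>\<bar> \<le> (2 * Lf) * \<bar>\<theta> - \<theta>'\<bar>"
  using Mh_lip[of n \<theta> \<omega> \<theta>'] Mp_lip[of \<theta> \<theta>'] unfolding Gf_def by linarith

lemma Gf_per: "Gf n (\<theta> + 1) \<omega> = Gf n \<theta> \<omega>" unfolding Gf_def Mh_per Mp_per ..

lemma Gf_meas[measurable]: "Gf n \<theta> \<in> borel_measurable M"
  unfolding Gf_def[abs_def] by measurable

lemma sup_set_eq: "{\<omega> \<in> space M. (SUP \<theta>. Gf n \<theta> \<omega>) > \<epsilon>} = (\<Union>q\<in>\<rat>. {\<omega> \<in> space M. Gf n q \<omega> > \<epsilon>})"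
proof safe
  fix \<omega> assume \<omega>: "\<omega> \<in> space M" and s: "(SUP \<theta>. Gf n \<theta> \<omega>) > \<epsilon>"
  have bdd: "bdd_above (range (\<lambda>\<theta>. Gf n \<theta> \<omega>))"
    using Gf_bound by (intro bdd_aboveI[where M="2*Bf"]) (auto simp: abs_le_iff)
  obtain \<theta> where th: "Gf n \<theta> \<omega> > \<epsilon>" using s less_cSUP_iff[OF _ bdd, of \<epsilon>] by auto
  define r where "r = Gf n \<theta> \<omega> - \<epsilon>"
  have r: "r > 0" using th by (simp add: r_def)
  have pos: "r / (2 * Lf + 1) > 0" using r Lf_nonneg by simp
  obtain q where q: "q \<in> \<rat>" "\<theta> < q" "q < \<theta> + r / (2 * Lf + 1)"
    using Rats_dense_in_real[of \<theta> "\<theta> + r / (2 * Lf + 1)"] pos by auto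
  have "\<bar>Gf n \<theta> \<omega> - Gf n q \<omega>\<bar> \<le> (2 * Lf) * \<bar>\<theta> - q\<bar>" by (rule Gf_lip)
  also have "\<dots> \<le> (2 * Lf) * (r / (2 * Lf + 1))" using q Lf_nonneg by (intro mult_left_mono) auto
  also have "\<dots> < r" using r Lf_nonneg by (simp add: field_simps)
  finally have "Gf n q \<omega> > \<epsilon>" unfolding r_def by linarith
  then show "\<omega> \<in> (\<Union>q\<in>\<rat>. {\<omega> \<in> space M. Gf n q \<omega> > \<epsilon>})" using q \<omega> by auto
next
  fix \<omega> q assume \<omega>: "\<omega> \<in> space M" and q: "q \<in> \<rat>" and g: "Gf n q \<omega> > \<epsilon>"
  have bdd: "bdd_above (range (\<lambda>\<theta>. Gf n \<theta> \<omega>))"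
    using Gf_bound by (intro bdd_aboveI[where M="2*Bf"]) (auto simp: abs_le_iff)
  have "Gf n q \<omega> \<le> (SUP \<theta>. Gf n \<theta> \<omega>)" by (rule cSUP_upper[OF _ bdd]) simp
  then show "(SUP \<theta>. Gf n \<theta> \<omega>) > \<epsilon>" using g by linarith
qed

lemma sup_set_meas: "{\<omega> \<in> space M. (SUP \<theta>. Gf n \<theta> \<omega>) > \<epsilon>} \<in> sets M"
  unfolding sup_set_eq by (intro sets.countable_UN'' countable_rat) measurable

lemma sup_prob_lim: assumes e: "\<epsilon> > 0"
  shows "(\<lambda>n. prob {\<omega> \<in> space M. (SUP \<theta>. Gf n \<theta> \<omega>) > \<epsilon>}) \<longlonglongrightarrow> 0"
proof -
  define N :: nat where "N = nat \<lceil>4 * Lf / \<epsilon>\<rceil> + 1"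
  have N: "N > 0" by (simp add: N_def)
  have KN: "2 * Lf / real N \<le> \<epsilon> / 2"
  proof -
    have "4 * Lf / \<epsilon> \<le> real N" unfolding N_def by linarith
    then have "4 * Lf \<le> real N * \<epsilon>" using e by (simp add: field_simps)
    then show ?thesis using N e by (simp add: field_simps)
  qed
  define C where "C = real N * (4 * Bf\<^sup>2 / (\<epsilon> / 4)\<^sup>2)"
  have ev: "\<forall>\<^sub>F n in sequentially. \<forall>k\<in>{0..<N}. \<bar>mn n (real k / real N) - Mp (real k / real N)\<bar> < \<epsilon> / 4"
  proof (rule eventually_ball_finite)
    show "finite {0..<N}" by simp
    show "\<forall>k\<in>{0..<N}. \<forall>\<^sub>F n in sequentially. \<bar>mn n (real k / real N) - Mp (real k / real N)\<bar> < \<epsilon> / 4"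
    proof
    fix k
    have "(\<lambda>n. mn n (real k / real N) - Mp (real k / real N)) \<longlonglongrightarrow> 0"
      using tendsto_diff[OF mn_lim[of "real k / real N"] tendsto_const[of "Mp (real k / real N)"]] by simp
    then show "\<forall>\<^sub>F n in sequentially. \<bar>mn n (real k / real N) - Mp (real k / real N)\<bar> < \<epsilon> / 4"
    proof -
      have all: "\<forall>r>0. \<forall>\<^sub>F n in sequentially. \<bar>mn n (real k / real N) - Mp (real k / real N)\<bar> < r"
        using \<open>(\<lambda>n. mn n (real k / real N) - Mp (real k / real N)) \<longlonglongrightarrow> 0\<close> by (simp add: tendsto_iff dist_real_def)
      have e4: "\<epsilon> / 4 > 0" using e by simp
      show ?thesis using all e4 by blast
    qed
    qed
  qed
  have bound: "prob {\<omega> \<in> space M. (SUP \<theta>. Gf n \<theta> \<omega>) > \<epsilon>} \<le> C / real n"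
    if n: "n > 0" and close: "\<forall>k\<in>{0..<N}. \<bar>mn n (real k / real N) - Mp (real k / real N)\<bar> < \<epsilon> / 4" for n
  proof -
    let ?A = "\<lambda>k. {\<omega> \<in> space M. \<epsilon> / 4 \<le> \<bar>Mh n (real k / real N) \<omega> - mn n (real k / real N)\<bar>}"
    have sub: "{\<omega> \<in> space M. (SUP \<theta>. Gf n \<theta> \<omega>) > \<epsilon>} \<subseteq> (\<Union>k\<in>{0..<N}. ?A k)"
    proof safe
      fix \<omega> assume \<omega>: "\<omega> \<in> space M" and s: "(SUP \<theta>. Gf n \<theta> \<omega>) > \<epsilon>"
      obtain k where k: "k \<in> {0..<N}" "Gf n (real k / real N) \<omega> > \<epsilon> / 2"
        using sup_grid[of "\<lambda>\<theta>. Gf n \<theta> \<omega>", OF Gf_bound Gf_lip Gf_per N _ KN s] Lf_nonneg by auto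
      have c: "\<bar>mn n (real k / real N) - Mp (real k / real N)\<bar> < \<epsilon> / 4" using close k(1) by blast
      have "\<epsilon> / 4 \<le> \<bar>Mh n (real k / real N) \<omega> - mn n (real k / real N)\<bar>"
        using k(2) c unfolding Gf_def by (auto simp: abs_real_def split: if_splits)
      then show "\<omega> \<in> (\<Union>k\<in>{0..<N}. ?A k)" using k \<omega> by auto
    qed
    have "prob {\<omega> \<in> space M. (SUP \<theta>. Gf n \<theta> \<omega>) > \<epsilon>} \<le> prob (\<Union>k\<in>{0..<N}. ?A k)"
      by (rule finite_measure_mono[OF sub]) measurable
    also have "\<dots> \<le> (\<Sum>k\<in>{0..<N}. prob (?A k))"
      by (rule finite_measure_subadditive_finite) auto
    also have "\<dots> \<le> (\<Sum>k\<in>{0..<N}. 4 * Bf\<^sup>2 / (real n * (\<epsilon> / 4)\<^sup>2))"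
      by (rule sum_mono) (rule cheb[OF n], use e in simp)
    also have "\<dots> = C / real n" by (simp add: C_def field_simps)
    finally show ?thesis .
  qed
  show ?thesis
  proof (rule tendsto_sandwich[where f="\<lambda>_. 0" and h="\<lambda>n. C / real n"])
    show "\<forall>\<^sub>F n in sequentially. 0 \<le> prob {\<omega> \<in> space M. (SUP \<theta>. Gf n \<theta> \<omega>) > \<epsilon>}" by simp
    show "\<forall>\<^sub>F n in sequentially. prob {\<omega> \<in> space M. (SUP \<theta>. Gf n \<theta> \<omega>) > \<epsilon>} \<le> C / real n"
      using ev eventually_gt_at_top[of 0] by eventually_elim (rule bound)
    show "(\<lambda>n. C / real n) \<longlonglongrightarrow> 0" by (rule lim_const_over_n)
  qed simp
qed

end

theorem lemma1:
  fixes M :: "'a measure" and f :: "real \<Rightarrow> real" and Z :: "nat \<Rightarrow> 'a \<Rightarrow> real"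
    and \<phi> \<Phi> :: "real \<Rightarrow> real" and \<theta>s :: real
  assumes P: "prob_space M"
    and lip: "\<exists>L. lipschitz_on L UNIV f"
    and per: "\<forall>x. f (x + 1) = f x"
    and exact: "\<forall>\<theta>. (\<theta> - \<theta>s) \<notin> \<int> \<longrightarrow>
                   emeasure lborel {x. f (x - \<theta>) \<noteq> f (x - \<theta>s)} > 0"
    and indep: "prob_space.indep_vars M (\<lambda>_. borel) Z UNIV"
    and dens: "\<And>i. distributed M lborel (Z i) (\<lambda>x. ennreal (\<phi> x))"
    and phi_nonneg: "\<And>x. \<phi> x \<ge> 0"
    and phi_even: "\<And>x. \<phi> (- x) = \<phi> x"
    and Phi_def: "\<And>t. \<Phi> t = measure M {\<omega> \<in> space M. Z 1 \<omega> \<le> t}"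
  shows "\<forall>\<epsilon>>0.
           (\<forall>n. {\<omega> \<in> space M.
                  (SUP \<theta>. \<bar>Mhat f (\<lambda>i. f (real i / real n - \<theta>s) + Z i \<omega>) n \<theta>
                          - Mpop f \<Phi> \<phi> \<theta>s \<theta>\<bar>) > \<epsilon>} \<in> sets M)
         \<and> ((\<lambda>n. measure M {\<omega> \<in> space M.
                  (SUP \<theta>. \<bar>Mhat f (\<lambda>i. f (real i / real n - \<theta>s) + Z i \<omega>) n \<theta>
                          - Mpop f \<Phi> \<phi> \<theta>s \<theta>\<bar>) > \<epsilon>}) \<longlonglongrightarrow> 0)"
proof -
  interpret S: setting M f Z \<phi> \<Phi> \<theta>s
    by (rule setting.intro[OF P], rule setting_axioms.intro) (use lip per indep dens Phi_def phi_nonneg in auto)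
  have eqfun: "\<bar>Mhat f (\<lambda>i. f (real i / real n - \<theta>s) + Z i \<omega>) n \<theta> - Mpop f \<Phi> \<phi> \<theta>s \<theta>\<bar> = S.Gf n \<theta> \<omega>"
    for n \<omega> \<theta> using S.Mhat_eq[of n \<omega> \<theta>] by (simp add: S.Gf_def S.g_def)
  show ?thesis unfolding eqfun using S.sup_set_meas S.sup_prob_lim by blast
qed

end
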